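(* For $a,s\in\mathbb C$, $(a,s/2)\in\overline{\mathbb B}_2$ if and only if there exists $p\in\mathbb T$ such that $(a,s,p)\in\overline{\mathbb P}$.
   Context: The pentablock is $\mathbb P=\{(a_{21},\operatorname{tr}A_0,\det A_0): A_0=[a_{ij}]\in M_2(\mathbb C),\ \|A_0\|<1\}\subset\mathbb C^3$ with closure $\overline{\mathbb P}$. $\overline{\mathbb B}_2$ is the closed Euclidean unit ball in $\mathbb C^2$ and $\mathbb T$ the unit circle. *)

theory Defs
  imports "HOL-Analysis.Analysis"
begin

definition mat_opnorm :: "complex^2^2 \<Rightarrow> real" where
  "mat_opnorm A = onorm (\<lambda>x::complex^2. A *v x)"

definition pentablock :: "(complex \<times> complex \<times> complex) set" where
  "pentablock = {(A $ 2 $ 1, trace A, det A) | A :: complex^2^2. mat_opnorm A < 1}"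

end

theory Submission
  imports Defs
begin

lemma norm_vec2_sq: "(norm (x::complex^2))^2 = (cmod (x$1))^2 + (cmod (x$2))^2"
  by (simp add: norm_vec_def L2_set_def sum_2)

lemma row_bound:
  fixes A :: "complex^2^2"
  assumes "mat_opnorm A \<le> 1"
  shows "(cmod (A$2$1))^2 + (cmod (A$2$2))^2 \<le> 1"
proof -
  let ?a = "A$2$1" and ?w = "A$2$2"
  define v :: "complex^2" where "v = vector [cnj ?a, cnj ?w]"
  define R where "R = (cmod ?a)^2 + (cmod ?w)^2"
  have R0: "R \<ge> 0" by (simp add: R_def)
  have "(A *v v)$2 = ?a * cnj ?a + ?w * cnj ?w"
    by (simp add: v_def matrix_vector_mult_def sum_2)
  also have "\<dots> = of_real R" by (simp only: R_def of_real_add complex_norm_square)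
  finally have e: "(A *v v)$2 = of_real R" .
  have nv: "norm v = sqrt R" 
    using norm_vec2_sq[of v] by (simp add: v_def R_def real_sqrt_unique)
  have "R \<le> norm (A *v v)" using Finite_Cartesian_Product.norm_nth_le[of "A *v v" 2] e R0 by simp
  also have "\<dots> \<le> mat_opnorm A * norm v"
    unfolding mat_opnorm_def by (rule onorm) simp
  also have "\<dots> \<le> sqrt R" using mult_right_mono[OF assms, of "sqrt R"] nv R0 by simp
  finally have "R \<le> sqrt R" .
  hence h: "R * R \<le> sqrt R * sqrt R" using R0 by (intro mult_mono) auto
  hence "R * R \<le> R" using R0 by simp
  hence "R \<le> 1" using R0 mult_strict_left_mono[of 1 R R] by (cases "R \<le> 1") auto
  thus ?thesis by (simp add: R_def)
qed

lemma col_bound: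
  fixes A :: "complex^2^2"
  assumes "mat_opnorm A \<le> 1"
  shows "(cmod (A$1$1))^2 + (cmod (A$2$1))^2 \<le> 1"
proof -
  define v :: "complex^2" where "v = vector [1, 0]"
  have "(norm v)^2 = 1" using norm_vec2_sq[of v] by (simp add: v_def)
  hence nv: "norm v = 1" by (metis norm_ge_zero real_sqrt_one real_sqrt_unique)
  have "(norm (A *v v))^2 = (cmod (A$1$1))^2 + (cmod (A$2$1))^2"
    using norm_vec2_sq[of "A *v v"] by (simp add: v_def matrix_vector_mult_def sum_2)
  moreover have "norm (A *v v) \<le> mat_opnorm A * norm v"
    unfolding mat_opnorm_def by (rule onorm) simp
  hence "norm (A *v v) \<le> 1" using assms nv by simp
  hence "(norm (A *v v))^2 \<le> 1" by (simp add: power_le_one)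
  ultimately show ?thesis by simp
qed

lemma pb_bound:
  assumes "(a, s, p) \<in> pentablock"
  shows "(cmod a)^2 + (cmod s)^2 / 4 \<le> 1"
proof -
  obtain A :: "complex^2^2" where A: "a = A$2$1" "s = trace A" "mat_opnorm A < 1"
    using assms unfolding pentablock_def by auto
  have c: "(cmod (A$1$1))^2 + (cmod a)^2 \<le> 1" using col_bound[of A] A by simp
  have r: "(cmod a)^2 + (cmod (A$2$2))^2 \<le> 1" using row_bound[of A] A by simp
  have s: "s = A$1$1 + A$2$2" using A by (simp add: trace_def sum_2)
  have "cmod s \<le> cmod (A$1$1) + cmod (A$2$2)" using s norm_triangle_ineq by blast
  hence "(cmod s)^2 \<le> (cmod (A$1$1) + cmod (A$2$2))^2" by (simp add: power_mono)
  also have "\<dots> \<le> 2 * ((cmod (A$1$1))^2 + (cmod (A$2$2))^2)"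
    by (smt (verit) sum_squares_bound power2_sum)
  finally show ?thesis using c r by simp
qed

lemma closure_bound:
  assumes "(a, s, p) \<in> closure pentablock"
  shows "(cmod a)^2 + (cmod s)^2 / 4 \<le> 1"
proof -
  let ?C = "{z :: complex \<times> complex \<times> complex. (cmod (fst z))^2 + (cmod (fst (snd z)))^2 / 4 \<le> 1}"
  have "closed ?C"
    by (intro closed_Collect_le continuous_intros) auto
  moreover have "pentablock \<subseteq> ?C" using pb_bound by auto
  ultimately have "closure pentablock \<subseteq> ?C" by (rule closure_minimal[rotated])
  thus ?thesis using assms by auto
qed

lemma unit_id:
  fixes al a p x y :: complex
  assumes "p * cnj p = 1"
  shows "(al*x - p*cnj a*y)*cnj(al*x - p*cnj a*y) + (a*x + p*cnj al*y)*cnj(a*x + p*cnj al*y)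
      = (al*cnj al + a*cnj a)*(x*cnj x + y*cnj y)"
proof -
  have "(al*x - p*cnj a*y)*cnj(al*x - p*cnj a*y) + (a*x + p*cnj al*y)*cnj(a*x + p*cnj al*y)
     = (al*cnj al + a*cnj a)*x*cnj x + (p * cnj p) * (al*cnj al + a*cnj a)*y*cnj y"
    by (simp add: algebra_simps)
  thus ?thesis using assms by (simp add: algebra_simps)
qed

definition Bm :: "real \<Rightarrow> complex \<Rightarrow> complex \<Rightarrow> complex \<Rightarrow> complex^2^2" where
  "Bm t al a p = vector [vector [of_real t * al, - (of_real t * p * cnj a)],
                         vector [of_real t * a, of_real t * p * cnj al]]"

lemma Bm_norm:
  assumes "cmod p = 1" "(cmod al)^2 + (cmod a)^2 = 1" "t \<ge> 0"
  shows "norm (Bm t al a p *v x) = t * norm x"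
proof -
  have pp: "p * cnj p = 1" using assms(1) complex_norm_square[of p] by simp
  have aa: "al * cnj al + a * cnj a = 1"
    using assms(2) complex_norm_square[of al] complex_norm_square[of a]
    by (metis of_real_1 of_real_add)
  let ?u = "al*(x$1) - p*cnj a*(x$2)" and ?v = "a*(x$1) + p*cnj al*(x$2)"
  have e1: "(Bm t al a p *v x)$1 = of_real t * ?u"
    by (simp add: Bm_def matrix_vector_mult_def sum_2 algebra_simps)
  have e2: "(Bm t al a p *v x)$2 = of_real t * ?v"
    by (simp add: Bm_def matrix_vector_mult_def sum_2 algebra_simps)
  have "complex_of_real ((norm (Bm t al a p *v x))^2)
      = of_real ((cmod (of_real t * ?u))^2) + of_real ((cmod (of_real t * ?v))^2)"
    using norm_vec2_sq[of "Bm t al a p *v x"] e1 e2 by simp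
  also have "\<dots> = of_real (t^2) * (?u * cnj ?u + ?v * cnj ?v)"
    unfolding complex_norm_square by (simp add: algebra_simps power2_eq_square)
  also have "\<dots> = of_real (t^2) * (x$1 * cnj (x$1) + x$2 * cnj (x$2))"
    using unit_id[OF pp, of al "x$1" a "x$2"] aa by simp
  also have "\<dots> = of_real ((t * norm x)^2)"
    using norm_vec2_sq[of x] complex_norm_square[of "x$1"] complex_norm_square[of "x$2"]
    by (simp add: power_mult_distrib)
  finally have "(norm (Bm t al a p *v x))^2 = (t * norm x)^2" using of_real_eq_iff by blast
  thus ?thesis using assms(3) by (simp add: power2_eq_iff_nonneg)
qed

lemma Bm_in:
  assumes "cmod p = 1" "(cmod al)^2 + (cmod a)^2 = 1" "0 \<le> t" "t < 1"
  shows "(of_real t * a, of_real t * (al + p * cnj al), of_real t ^ 2 * p) \<in> pentablock"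
proof -
  have pp: "p * cnj p = 1" using assms(1) complex_norm_square[of p] by simp
  have aa: "al * cnj al + a * cnj a = 1"
    using assms(2) complex_norm_square[of al] complex_norm_square[of a]
    by (metis of_real_1 of_real_add)
  let ?B = "Bm t al a p"
  have "mat_opnorm ?B \<le> t" unfolding mat_opnorm_def
    by (rule onorm_le) (simp add: Bm_norm[OF assms(1,2,3)])
  hence "mat_opnorm ?B < 1" using assms(4) by simp
  moreover have "?B $ 2 $ 1 = of_real t * a" by (simp add: Bm_def)
  moreover have "trace ?B = of_real t * (al + p * cnj al)"
    by (simp add: Bm_def trace_def sum_2 algebra_simps)
  moreover have "det ?B = of_real t ^ 2 * p"
  proof -
    have "det ?B = of_real t ^ 2 * p * (al * cnj al + a * cnj a)"
      by (simp add: Bm_def det_2 algebra_simps power2_eq_square)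
    thus ?thesis using aa by simp
  qed
  ultimately show ?thesis unfolding pentablock_def by force
qed

lemma construct:
  assumes "(cmod a)^2 + (cmod s)^2 / 4 \<le> 1"
  shows "\<exists>p. cmod p = 1 \<and> (a, s, p) \<in> closure pentablock"
proof -
  define h where "h = sqrt (1 - (cmod a)^2 - (cmod s)^2 / 4)"
  define u where "u = (if s = 0 then 1 else s / of_real (cmod s))"
  define al where "al = u * Complex (cmod s / 2) h"
  define p where "p = (if al = 0 then 1 else (s - al) / cnj al)"
  have hh: "h^2 = 1 - (cmod a)^2 - (cmod s)^2 / 4" using assms by (simp add: h_def)
  have u1: "cmod u = 1" by (simp add: u_def norm_divide)
  have us: "u * of_real (cmod s) = s" by (simp add: u_def)
  have nal: "(cmod al)^2 = (cmod s)^2/4 + h^2"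
    by (simp add: al_def norm_mult u1 complex_norm power_divide)
  have sal: "s - al = u * Complex (cmod s / 2) (- h)"
  proof -
    have "s = u * Complex (cmod s) 0" using us by (simp add: complex_of_real_def)
    hence "s - al = u * (Complex (cmod s) 0 - Complex (cmod s / 2) h)" by (simp add: al_def algebra_simps)
    thus ?thesis by (simp add: complex_eq_iff)
  qed
  have "cmod (s - al) = cmod u * cmod (Complex (cmod s / 2) (- h))" by (simp only: sal norm_mult)
  also have "\<dots> = cmod al" by (simp only: al_def norm_mult complex_norm power2_minus)
  finally have nsal: "cmod (s - al) = cmod al" .
  have p1: "cmod p = 1" using nsal by (simp add: p_def norm_divide)
  have ps: "al + p * cnj al = s"
  proof (cases "al = 0")
    case True
    hence "(cmod s)^2/4 + h^2 = 0" using nal by simp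
    hence "(cmod s)^2/4 = 0" by (simp add: add_nonneg_eq_0_iff)
    hence "s = 0" by simp
    thus ?thesis using True by (simp add: p_def)
  next
    case False thus ?thesis by (simp add: p_def)
  qed
  have n1: "(cmod al)^2 + (cmod a)^2 = 1" using nal hh by simp
  define t :: "nat \<Rightarrow> real" where "t n = real n / real (Suc n)" for n
  have t0: "0 \<le> t n" "t n < 1" for n by (simp_all add: t_def)
  have tl: "t \<longlonglongrightarrow> 1" unfolding t_def by (rule LIMSEQ_n_over_Suc_n)
  hence ctl: "(\<lambda>n. complex_of_real (t n)) \<longlonglongrightarrow> 1" using tendsto_of_real[OF tl] by simp
  have "((\<lambda>n. (of_real (t n) * a, of_real (t n) * s, of_real (t n) ^ 2 * p)) \<longlongrightarrow> (1 * a, 1 * s, 1 ^ 2 * p)) sequentially"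
    by (intro tendsto_Pair tendsto_mult tendsto_power ctl tendsto_const)
  hence lim: "((\<lambda>n. (of_real (t n) * a, of_real (t n) * s, of_real (t n) ^ 2 * p)) \<longlongrightarrow> (a, s, p)) sequentially"
    by simp
  have "\<forall>n. (of_real (t n) * a, of_real (t n) * s, of_real (t n) ^ 2 * p) \<in> pentablock"
  proof
    fix n
    show "(of_real (t n) * a, of_real (t n) * s, of_real (t n) ^ 2 * p) \<in> pentablock"
      using Bm_in[OF p1 n1 t0(1)[of n] t0(2)[of n]] unfolding ps .
  qed
  hence "(a, s, p) \<in> closure pentablock" using lim
    by (intro iffD2[OF closure_sequential] exI[of _ "\<lambda>n. (of_real (t n) * a, of_real (t n) * s, of_real (t n) ^ 2 * p)"] conjI)
  thus ?thesis using p1 by blast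
qed

theorem mainTheorem10:
  fixes a s :: complex
  shows "(a, s / 2) \<in> cball (0 :: complex \<times> complex) 1 \<longleftrightarrow>
         (\<exists>p. cmod p = 1 \<and> (a, s, p) \<in> closure pentablock)"
proof -
  have "(a, s / 2) \<in> cball (0 :: complex \<times> complex) 1 \<longleftrightarrow> (cmod a)^2 + (cmod s)^2 / 4 \<le> 1"
    by (simp add: norm_Pair norm_divide power_divide)
  thus ?thesis using construct closure_bound by blast
qed

end
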